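(* As $2$-cochains on $PSL(2,\mathbb{Z})$, $\delta\Phi=-12\,\delta(rot)$; that is, for all $g_1,g_2\in PSL(2,\mathbb{Z})$ and any lifts $\tilde g_1,\tilde g_2\in B_3$, $$\Phi(g_1)+\Phi(g_2)-\Phi(g_1g_2)=-12\big(rot(\tilde g_1)+rot(\tilde g_2)-rot(\tilde g_1\tilde g_2)\big).$$
   Context: $B_3$ is the braid group with standard generators $\sigma_1,\sigma_2$, mapped onto $PSL(2,\mathbb{Z})$ by $\sigma_1\mapsto \pm\begin{pmatrix}1&0\\-1&1\end{pmatrix}$, $\sigma_2\mapsto \pm\begin{pmatrix}1&1\\0&1\end{pmatrix}$ (kernel generated by $(\sigma_1\sigma_2\sigma_1)^2$); $\bar\sigma$ denotes the image. Rademacher function: with $A=\pm\begin{pmatrix}0&1\\-1&0\end{pmatrix}$, $B=\pm\begin{pmatrix}1&-1\\1&0\end{pmatrix}$, $PSL(2,\mathbb{Z})=\langle A\rangle *\langle B\rangle\cong\mathbb{Z}/2*\mathbb{Z}/3$, every $g$ is uniquely $B^{r_1}AB^{r_2}A\cdots AB^{r_k}$ with $r_1,r_k\in\{-1,0,1\}$ and $r_i\in\{-1,1\}$ otherwise; $\Phi(g)=\sum_i r_i$. Rotation number on $B_3$: for $g=\pm\begin{pmatrix}\alpha&\beta\\ \gamma&\delta\end{pmatrix}$ put $a=\gamma/\alpha$, $b=\delta/\beta\in\mathbb{Q}\cup\{\infty\}$ ($\infty$ read as $\pm\infty$ as needed). For $g=\bar\sigma$ one of the following holds, and $\sigma$ is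 written uniquely as $(\sigma_1\sigma_2\sigma_1)^k w$ accordingly: (1) $0\le a<b\le+\infty$: $k$ even, $w$ a word in $\sigma_1^{-1},\sigma_2$ only; (2) $-\infty\le a<b\le 0$: $k$ odd, $w$ a word in $\sigma_1^{-1},\sigma_2$; (3) $0\le b<a\le+\infty$: $k$ odd, $w$ a word in $\sigma_1,\sigma_2^{-1}$; (4) $-\infty\le b<a\le 0$: $k$ even, $w$ a word in $\sigma_1,\sigma_2^{-1}$. Then $rot(\sigma)=k/4$. The expression $rot(\tilde g_1)+rot(\tilde g_2)-rot(\tilde g_1\tilde g_2)$ does not depend on the choice of lifts. *)

theory Defs
  imports Complex_Main "HOL-Library.Extended_Real"
begin

text \<open>A matrix (alpha, beta, gamma, delta) stands for [[alpha, beta],[gamma, delta]].\<close>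
type_synonym mat2 = "int \<times> int \<times> int \<times> int"

fun mmul :: "mat2 \<Rightarrow> mat2 \<Rightarrow> mat2" where
  "mmul (a, b, c, d) (a', b', c', d') =
     (a * a' + b * c', a * b' + b * d', c * a' + d * c', c * b' + d * d')"

definition mid :: mat2 where "mid = (1, 0, 0, 1)"

fun mneg :: "mat2 \<Rightarrow> mat2" where
  "mneg (a, b, c, d) = (-a, -b, -c, -d)"

fun mdet :: "mat2 \<Rightarrow> int" where
  "mdet (a, b, c, d) = a * d - b * c"

text \<open>Equality in PSL(2,Z): equality up to sign.\<close>
definition pm_eq :: "mat2 \<Rightarrow> mat2 \<Rightarrow> bool" where
  "pm_eq M N \<longleftrightarrow> M = N \<or> M = mneg N"

text \<open>Letters: 1 = sigma_1, -1 = sigma_1^{-1}, 2 = sigma_2, -2 = sigma_2^{-1}.\<close>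
definition braid_word :: "int list \<Rightarrow> bool" where
  "braid_word w \<longleftrightarrow> set w \<subseteq> {1, -1, 2, -2}"

inductive braid_basic :: "int list \<Rightarrow> int list \<Rightarrow> bool" where
  cancel1: "i \<in> {1, -1, 2, -2} \<Longrightarrow> braid_basic [i, -i] []"
| braid: "braid_basic [1, 2, 1] [2, 1, 2]"

text \<open>Equality in B_3: the congruence generated by free cancellation and the braid relation.\<close>
inductive braid_eq :: "int list \<Rightarrow> int list \<Rightarrow> bool" where
  refl: "braid_eq w w"
| step: "braid_basic x y \<Longrightarrow> braid_eq (u @ x @ v) (u @ y @ v)"
| sym: "braid_eq w w' \<Longrightarrow> braid_eq w' w"
| trans: "braid_eq w w' \<Longrightarrow> braid_eq w' w'' \<Longrightarrow> braid_eq w w''"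

definition delta_pow :: "int \<Rightarrow> int list" where
  "delta_pow k = (if k \<ge> 0 then concat (replicate (nat k) [1, 2, 1])
                  else concat (replicate (nat (-k)) [-1, -2, -1]))"

text \<open>Image of a letter in SL(2,Z) (lifting the map B_3 -> PSL(2,Z)).\<close>
fun letter_mat :: "int \<Rightarrow> mat2" where
  "letter_mat i =
    (if i = 1 then (1, 0, -1, 1) else if i = -1 then (1, 0, 1, 1)
     else if i = 2 then (1, 1, 0, 1) else if i = -2 then (1, -1, 0, 1) else mid)"

definition braid_img :: "int list \<Rightarrow> mat2" where
  "braid_img w = foldr (\<lambda>i M. mmul (letter_mat i) M) w mid"

definition matA :: mat2 where "matA = (0, 1, -1, 0)"
definition matB :: mat2 where "matB = (1, -1, 1, 0)"
definition matBinv :: mat2 where "matBinv = (0, 1, -1, 1)"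

definition Bpow :: "int \<Rightarrow> mat2" where
  "Bpow r = (if r \<ge> 0 then (mmul matB ^^ nat r) mid else (mmul matBinv ^^ nat (-r)) mid)"

fun rad_word :: "int list \<Rightarrow> mat2" where
  "rad_word [] = mid"
| "rad_word [r] = Bpow r"
| "rad_word (r # rs) = mmul (Bpow r) (mmul matA (rad_word rs))"

definition rad_valid :: "int list \<Rightarrow> bool" where
  "rad_valid rs \<longleftrightarrow> rs \<noteq> [] \<and> hd rs \<in> {-1, 0, 1} \<and> last rs \<in> {-1, 0, 1}
     \<and> (\<forall>i. 0 < i \<and> i < length rs - 1 \<longrightarrow> rs ! i \<in> {-1, 1})"

definition Rademacher :: "mat2 \<Rightarrow> int" where
  "Rademacher g = (THE s. \<exists>rs. rad_valid rs \<and> pm_eq (rad_word rs) g \<and> s = sum_list rs)"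

text \<open>The possible values of p/q in Q \<union> {\<infinity>}, where \<infinity> may be read as +\<infinity> or -\<infinity>.\<close>
definition qvals :: "int \<Rightarrow> int \<Rightarrow> ereal set" where
  "qvals p q = (if q \<noteq> 0 then {ereal (real_of_int p / real_of_int q)} else {\<infinity>, -\<infinity>})"

fun rot_case :: "nat \<Rightarrow> mat2 \<Rightarrow> bool" where
  "rot_case n (\<alpha>, \<beta>, \<gamma>, \<delta>) =
     (\<exists>a \<in> qvals \<gamma> \<alpha>. \<exists>b \<in> qvals \<delta> \<beta>.
        (n = 1 \<and> 0 \<le> a \<and> a < b \<and> b \<le> \<infinity>) \<or>
        (n = 2 \<and> -\<infinity> \<le> a \<and> a < b \<and> b \<le> 0) \<or>
        (n = 3 \<and> 0 \<le> b \<and> b < a \<and> a \<le> \<infinity>) \<or>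
        (n = 4 \<and> -\<infinity> \<le> b \<and> b < a \<and> a \<le> 0))"

definition rot :: "int list \<Rightarrow> real" where
  "rot \<sigma> = real_of_int (THE k. \<exists>w. braid_eq \<sigma> (delta_pow k @ w) \<and>
      ((rot_case 1 (braid_img \<sigma>) \<and> even k \<and> set w \<subseteq> {-1, 2}) \<or>
       (rot_case 2 (braid_img \<sigma>) \<and> odd k \<and> set w \<subseteq> {-1, 2}) \<or>
       (rot_case 3 (braid_img \<sigma>) \<and> odd k \<and> set w \<subseteq> {1, -2}) \<or>
       (rot_case 4 (braid_img \<sigma>) \<and> even k \<and> set w \<subseteq> {1, -2}))) / 4"

end

theory Submission
  imports Defs
begin


lemma be_cong: "braid_eq u v \<Longrightarrow> braid_eq (p @ u @ q) (p @ v @ q)"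
proof (induction rule: braid_eq.induct)
  case (refl w) then show ?case by (rule braid_eq.refl)
next
  case (step x y u v)
  have "braid_eq ((p @ u) @ x @ (v @ q)) ((p @ u) @ y @ (v @ q))" by (rule braid_eq.step[OF step])
  then show ?case by simp
next
  case (sym w w') then show ?case using braid_eq.sym by blast
next
  case (trans w w' w'') then show ?case using braid_eq.trans by blast
qed

lemma be_app: "braid_eq u u' \<Longrightarrow> braid_eq v v' \<Longrightarrow> braid_eq (u @ v) (u' @ v')"
proof -
  assume a: "braid_eq u u'" and b: "braid_eq v v'"
  have "braid_eq ([] @ u @ v) ([] @ u' @ v)" by (rule be_cong[OF a])
  moreover have "braid_eq (u' @ v @ []) (u' @ v' @ [])" by (rule be_cong[OF b])
  ultimately show ?thesis by (auto intro: braid_eq.trans)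
qed

lemma be_appL: "braid_eq v v' \<Longrightarrow> braid_eq (u @ v) (u @ v')"
  by (rule be_app[OF braid_eq.refl])
lemma be_appR: "braid_eq u u' \<Longrightarrow> braid_eq (u @ v) (u' @ v)"
  by (rule be_app[OF _ braid_eq.refl])

lemma be_basic: "braid_basic x y \<Longrightarrow> braid_eq x y"
  using braid_eq.step[of x y "[]" "[]"] by simp

lemma be_cancel: "i \<in> {1, -1, 2, -2} \<Longrightarrow> braid_eq [i, -i] []"
  by (rule be_basic, rule braid_basic.cancel1)

lemma be_cancel_mid: "i \<in> {1, -1, 2, -2} \<Longrightarrow> braid_eq (u @ [i, -i] @ v) (u @ v)"
  using be_cong[OF be_cancel, of i u v] by simp

lemma be_braid: "braid_eq [1,2,1] [2,1,2]"
  by (rule be_basic, rule braid_basic.braid)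

declare braid_eq.refl[simp]

lemma be_trans[trans]: "braid_eq a b \<Longrightarrow> braid_eq b c \<Longrightarrow> braid_eq a c"
  by (rule braid_eq.trans)

lemma be_sym: "braid_eq a b \<Longrightarrow> braid_eq b a" by (rule braid_eq.sym)

lemma c1: "braid_eq [-1,-2,-1,1,2,1] []"
proof -
  have "braid_eq [-1,-2,-1,1,2,1] [-1,-2,2,1]" using be_cancel_mid[of "-1" "[-1,-2]" "[2,1]"] by simp
  also have "braid_eq [-1,-2,2,1] [-1,1]" using be_cancel_mid[of "-2" "[-1]" "[1]"] by simp
  also have "braid_eq [-1,1] []" using be_cancel_mid[of "-1" "[]" "[]"] by simp
  finally show ?thesis .
qed

lemma c2: "braid_eq [1,2,1,-1,-2,-1] []"
proof -
  have "braid_eq [1,2,1,-1,-2,-1] [1,2,-2,-1]" using be_cancel_mid[of "1" "[1,2]" "[-2,-1]"] by simp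
  also have "braid_eq [1,2,-2,-1] [1,-1]" using be_cancel_mid[of "2" "[1]" "[-1]"] by simp
  also have "braid_eq [1,-1] []" using be_cancel_mid[of "1" "[]" "[]"] by simp
  finally show ?thesis .
qed

fun phi :: "int \<Rightarrow> int" where
  "phi i = (if i = 1 then 2 else if i = 2 then 1 else if i = -1 then -2 else if i = -2 then -1 else i)"

declare phi.simps[simp del]
lemma phi_vals[simp]: "phi 1 = 2" "phi 2 = 1" "phi (-1) = -2" "phi (-2) = -1"
  by (simp_all add: phi.simps)

lemma comm1: "braid_eq [1,1,2,1] [1,2,1,2]"
  using be_cong[OF be_braid, of "[1]" "[]"] by simp
lemma comm2: "braid_eq [2,1,2,1] [1,2,1,1]"
  using be_cong[OF be_sym[OF be_braid], of "[]" "[1]"] by simp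

lemma comm_neg:
  assumes h: "braid_eq ([j] @ [1,2,1]) ([1,2,1] @ [i])" and i: "i \<in> {1,-1,2,-2}" and j: "j \<in> {1,-1,2,-2}"
  shows "braid_eq ([-j] @ [1,2,1]) ([1,2,1] @ [-i])"
proof -
  have "braid_eq ([-j] @ [1,2,1]) ([-j] @ [1,2,1] @ [i, -i])"
    using be_sym[OF be_cancel_mid[of i "[-j,1,2,1]" "[]"]] i by simp
  also have "braid_eq ([-j] @ [1,2,1] @ [i, -i]) ([-j] @ ([1,2,1] @ [i]) @ [-i])" by simp
  also have "braid_eq ([-j] @ ([1,2,1] @ [i]) @ [-i]) ([-j] @ ([j] @ [1,2,1]) @ [-i])"
    by (rule be_cong[OF be_sym[OF h]])
  also have "braid_eq ([-j] @ ([j] @ [1,2,1]) @ [-i]) ([1,2,1] @ [-i])"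
  proof -
    have "-j \<in> {1,-1,2,-2}" using j by auto
    from be_cancel_mid[OF this, of "[]" "[1,2,1,-i]"] show ?thesis by simp
  qed
  finally show ?thesis .
qed

lemma comm_letter: "i \<in> {1,-1,2,-2} \<Longrightarrow> braid_eq ([i] @ [1,2,1]) ([1,2,1] @ [phi i])"
proof -
  have a: "braid_eq ([1] @ [1,2,1]) ([1,2,1] @ [2])" using comm1 by simp
  have b: "braid_eq ([2] @ [1,2,1]) ([1,2,1] @ [1])" using comm2 by simp
  assume "i \<in> {1,-1,2,-2}"
  then consider "i = 1" | "i = 2" | "i = -1" | "i = -2" by blast
  then show ?thesis
  proof cases
    case 3 then show ?thesis using comm_neg[OF a] by simp
  next
    case 4 then show ?thesis using comm_neg[OF b] by simp
  qed (use a b in simp_all)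
qed

abbreviation "LL \<equiv> {1::int,-1,2,-2}"
abbreviation "PP \<equiv> {-1::int, 2}"
abbreviation "NN \<equiv> {1::int, -2}"

lemma concat_rep_snoc: "concat (replicate n x) @ x = concat (replicate (Suc n) x)"
  by (induction n) auto

lemma dp_succ: "braid_eq (delta_pow k @ [1,2,1]) (delta_pow (k+1))"
proof (cases "k \<ge> 0")
  case True
  then have "nat (k+1) = Suc (nat k)" by simp
  then show ?thesis using True by (simp add: delta_pow_def concat_rep_snoc)
next
  case False
  then have "nat (-k) > 0" by simp
  then obtain m where m: "nat (-k) = Suc m" using gr0_implies_Suc by blast
  have "delta_pow k = concat (replicate m [-1,-2,-1]) @ [-1,-2,-1]"
    using False m by (simp add: delta_pow_def concat_rep_snoc)
  moreover have "delta_pow (k+1) = concat (replicate m [-1,-2,-1])"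
  proof (cases "k = -1")
    case True then show ?thesis using m by (simp add: delta_pow_def)
  next
    case False2: False
    then have "nat (-(k+1)) = m" using m by simp
    then show ?thesis using False False2 by (simp add: delta_pow_def)
  qed
  moreover have "braid_eq (concat (replicate m [-1,-2,-1]) @ [-1,-2,-1] @ [1,2,1]) (concat (replicate m [-1,-2,-1]) @ [])"
    using be_appL[OF c1] by simp
  ultimately show ?thesis by simp
qed

lemma dp_pred: "braid_eq (delta_pow k @ [-1,-2,-1]) (delta_pow (k-1))"
proof (cases "k \<le> 0")
  case True
  then have "nat (-(k-1)) = Suc (nat (-k))" by simp
  then show ?thesis using True by (auto simp add: delta_pow_def concat_rep_snoc)
next
  case False
  then have "nat k > 0" by simp
  then obtain m where m: "nat k = Suc m" using gr0_implies_Suc by blast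
  have "delta_pow k = concat (replicate m [1,2,1]) @ [1,2,1]"
    using False m by (simp add: delta_pow_def concat_rep_snoc)
  moreover have "delta_pow (k-1) = concat (replicate m [1,2,1])"
  proof -
    have "nat (k-1) = m" using m by simp
    then show ?thesis using False by (simp add: delta_pow_def)
  qed
  moreover have "braid_eq (concat (replicate m [1,2,1]) @ [1,2,1] @ [-1,-2,-1]) (concat (replicate m [1,2,1]) @ [])"
    using be_appL[OF c2] by simp
  ultimately show ?thesis by simp
qed

lemma phi_L: "i \<in> LL \<Longrightarrow> phi i \<in> LL" by auto
lemma phi_phi: "i \<in> LL \<Longrightarrow> phi (phi i) = i" by auto
lemma phi_PN: "set w \<subseteq> PP \<Longrightarrow> set (map phi w) \<subseteq> NN" by auto
lemma phi_NP: "set w \<subseteq> NN \<Longrightarrow> set (map phi w) \<subseteq> PP" by auto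

lemma comm_word: "set x \<subseteq> LL \<Longrightarrow> braid_eq (x @ [1,2,1]) ([1,2,1] @ map phi x)"
proof (induction x)
  case Nil then show ?case by simp
next
  case (Cons i x)
  then have i: "i \<in> LL" and x: "set x \<subseteq> LL" by auto
  have "braid_eq ([i] @ (x @ [1,2,1])) ([i] @ ([1,2,1] @ map phi x))"
    by (rule be_appL[OF Cons.IH[OF x]])
  also have "braid_eq ([i] @ ([1,2,1] @ map phi x)) (([1,2,1] @ [phi i]) @ map phi x)"
    using be_appR[OF comm_letter[OF i], of "map phi x"] by simp
  finally show ?case by simp
qed

lemma comm_letter': assumes i: "i \<in> LL" shows "braid_eq ([i] @ [-1,-2,-1]) ([-1,-2,-1] @ [phi i])"
proof -
  have "braid_eq ([i] @ [-1,-2,-1]) (([-1,-2,-1] @ [1,2,1]) @ [i] @ [-1,-2,-1])"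
    using be_appR[OF be_sym[OF c1], of "[i] @ [-1,-2,-1]"] by simp
  also have "braid_eq (([-1,-2,-1] @ [1,2,1]) @ [i] @ [-1,-2,-1]) ([-1,-2,-1] @ ([1,2,1] @ [i]) @ [-1,-2,-1])" by simp
  also have "braid_eq ([-1,-2,-1] @ ([1,2,1] @ [i]) @ [-1,-2,-1]) ([-1,-2,-1] @ ([phi i] @ [1,2,1]) @ [-1,-2,-1])"
    using be_cong[OF be_sym[OF comm_letter[OF phi_L[OF i]]], of "[-1,-2,-1]" "[-1,-2,-1]"] phi_phi[OF i] by simp
  also have "braid_eq ([-1,-2,-1] @ ([phi i] @ [1,2,1]) @ [-1,-2,-1]) (([-1,-2,-1] @ [phi i]) @ ([1,2,1] @ [-1,-2,-1]))" by simp
  also have "braid_eq (([-1,-2,-1] @ [phi i]) @ ([1,2,1] @ [-1,-2,-1])) (([-1,-2,-1] @ [phi i]) @ [])"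
    using be_appL[OF c2, of "[-1,-2,-1] @ [phi i]"] by simp
  finally show ?thesis by simp
qed

lemma comm_word': "set x \<subseteq> LL \<Longrightarrow> braid_eq (x @ [-1,-2,-1]) ([-1,-2,-1] @ map phi x)"
proof (induction x)
  case Nil then show ?case by simp
next
  case (Cons i x)
  then have i: "i \<in> LL" and x: "set x \<subseteq> LL" by auto
  have "braid_eq ([i] @ (x @ [-1,-2,-1])) ([i] @ ([-1,-2,-1] @ map phi x))"
    by (rule be_appL[OF Cons.IH[OF x]])
  also have "braid_eq ([i] @ ([-1,-2,-1] @ map phi x)) (([-1,-2,-1] @ [phi i]) @ map phi x)"
    using be_appR[OF comm_letter'[OF i], of "map phi x"] by simp
  finally show ?case by simp
qed

lemma hD: assumes "braid_eq s (delta_pow k @ w0 @ [1,2,1] @ t)" "set w0 \<subseteq> LL"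
  shows "braid_eq s (delta_pow (k+1) @ map phi w0 @ t)"
proof -
  have "braid_eq (delta_pow k @ (w0 @ [1,2,1]) @ t) (delta_pow k @ ([1,2,1] @ map phi w0) @ t)"
    by (rule be_cong[OF comm_word[OF assms(2)]])
  also have "braid_eq (delta_pow k @ ([1,2,1] @ map phi w0) @ t) ((delta_pow k @ [1,2,1]) @ map phi w0 @ t)" by simp
  also have "braid_eq ((delta_pow k @ [1,2,1]) @ map phi w0 @ t) (delta_pow (k+1) @ map phi w0 @ t)"
    by (rule be_appR[OF dp_succ])
  finally show ?thesis using assms(1) be_trans by simp
qed

lemma hD': assumes "braid_eq s (delta_pow k @ w0 @ [-1,-2,-1] @ t)" "set w0 \<subseteq> LL"
  shows "braid_eq s (delta_pow (k-1) @ map phi w0 @ t)"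
proof -
  have "braid_eq (delta_pow k @ (w0 @ [-1,-2,-1]) @ t) (delta_pow k @ ([-1,-2,-1] @ map phi w0) @ t)"
    by (rule be_cong[OF comm_word'[OF assms(2)]])
  also have "braid_eq (delta_pow k @ ([-1,-2,-1] @ map phi w0) @ t) ((delta_pow k @ [-1,-2,-1]) @ map phi w0 @ t)" by simp
  also have "braid_eq ((delta_pow k @ [-1,-2,-1]) @ map phi w0 @ t) (delta_pow (k-1) @ map phi w0 @ t)"
    by (rule be_appR[OF dp_pred])
  finally show ?thesis using assms(1) be_trans by simp
qed

lemma hR: assumes "braid_eq s (delta_pow k @ w0 @ u)" "braid_eq u v"
  shows "braid_eq s (delta_pow k @ w0 @ v)"
  using be_trans[OF assms(1) be_appL[OF be_appL[OF assms(2)]]] by simp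

lemma be_canc4: "braid_eq [1,-1] []" "braid_eq [-1,1] []" "braid_eq [2,-2] []" "braid_eq [-2,2] []"
  using be_cancel[of 1] be_cancel[of "-1"] be_cancel[of 2] be_cancel[of "-2"] by simp_all

lemma r21: "braid_eq [2,1] ([-1] @ [1,2,1] @ [])" using be_sym[OF be_cancel_mid[of "-1" "[]" "[2,1]"]] by simp
lemma r12: "braid_eq [-1,-2] ([] @ [-1,-2,-1] @ [1])" using be_sym[OF be_cancel_mid[of "-1" "[-1,-2]" "[]"]] by simp
lemma r21': "braid_eq [-2,-1] ([1] @ [-1,-2,-1] @ [])" using be_sym[OF be_cancel_mid[of "1" "[]" "[-2,-1]"]] by simp
lemma r12': "braid_eq [1,2] ([] @ [1,2,1] @ [-1])" using be_sym[OF be_cancel_mid[of "1" "[1,2]" "[]"]] by simp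


lemma decomp: "set s \<subseteq> LL \<Longrightarrow> \<exists>k w. braid_eq s (delta_pow k @ w) \<and> (set w \<subseteq> PP \<or> set w \<subseteq> NN)"
proof (induction s rule: rev_induct)
  case Nil
  have "braid_eq [] (delta_pow 0 @ [])" by (simp add: delta_pow_def)
  then show ?case by (intro exI[of _ 0] exI[of _ "[]"]) simp
next
  case (snoc i s)
  then have i: "i \<in> LL" and sL: "set s \<subseteq> LL" by auto
  from snoc.IH[OF sL] obtain k w where kw: "braid_eq s (delta_pow k @ w)" and ty: "set w \<subseteq> PP \<or> set w \<subseteq> NN" by blast
  have base: "braid_eq (s @ [i]) (delta_pow k @ w @ [i])" using be_appR[OF kw, of "[i]"] by simp
  show ?case
  proof (cases "(set w \<subseteq> PP \<and> i \<in> PP) \<or> (set w \<subseteq> NN \<and> i \<in> NN)")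
    case True
    then have "set (w @ [i]) \<subseteq> PP \<or> set (w @ [i]) \<subseteq> NN" by auto
    then show ?thesis using base by blast
  next
    case False
    then have "w \<noteq> []" using i by auto
    then obtain w0 l where w: "w = w0 @ [l]" by (metis rev_exhaust)
    have base': "braid_eq (s @ [i]) (delta_pow k @ w0 @ [l, i])" using base w by simp
    show ?thesis
    proof (cases "set w \<subseteq> PP")
      case True
      then have iN: "i \<in> NN" and w0P: "set w0 \<subseteq> PP" and lP: "l \<in> PP" using False i w by auto
      have w0L: "set w0 \<subseteq> LL" using w0P by auto
      have pPN: "set (map phi w0) \<subseteq> NN" using phi_PN[OF w0P] .
      consider "i = 1" "l = -1" | "i = 1" "l = 2" | "i = -2" "l = 2" | "i = -2" "l = -1" using iN lP by auto
      then show ?thesis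
      proof cases
        case 1
        have "braid_eq (s @ [i]) (delta_pow k @ w0 @ [])"
          using hR[OF base'[unfolded 1] be_canc4(2)] 1 by simp
        then show ?thesis using w0P by (metis append_Nil2)
      next
        case 2
        have "braid_eq (s @ [i]) (delta_pow k @ w0 @ [-1] @ [1,2,1] @ [])"
          using hR[OF base'[unfolded 2] r21] 2 by simp
        then have "braid_eq (s @ [i]) (delta_pow k @ (w0 @ [-1]) @ [1,2,1] @ [])" by simp
        from hD[OF this] w0L have "braid_eq (s @ [i]) (delta_pow (k+1) @ map phi (w0 @ [-1]))" by simp
        moreover have "set (map phi (w0 @ [-1])) \<subseteq> NN" using pPN by simp
        ultimately show ?thesis by blast
      next
        case 3
        have "braid_eq (s @ [i]) (delta_pow k @ w0 @ [])"
          using hR[OF base'[unfolded 3] be_canc4(3)] 3 by simp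
        then show ?thesis using w0P by (metis append_Nil2)
      next
        case 4
        have "braid_eq (s @ [i]) (delta_pow k @ w0 @ [] @ [-1,-2,-1] @ [1])"
          using hR[OF base'[unfolded 4] r12] 4 by simp
        then have "braid_eq (s @ [i]) (delta_pow k @ w0 @ [-1,-2,-1] @ [1])" by simp
        from hD'[OF this w0L] have "braid_eq (s @ [i]) (delta_pow (k-1) @ map phi w0 @ [1])" .
        moreover have "set (map phi w0 @ [1]) \<subseteq> NN" using pPN by simp
        ultimately show ?thesis by blast
      qed
    next
      case False2: False
      then have wN: "set w \<subseteq> NN" using ty by auto
      then have iP: "i \<in> PP" and w0N: "set w0 \<subseteq> NN" and lN: "l \<in> NN" using False i w by auto
      have w0L: "set w0 \<subseteq> LL" using w0N by auto
      have pNP: "set (map phi w0) \<subseteq> PP" using phi_NP[OF w0N] .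
      consider "i = -1" "l = 1" | "i = -1" "l = -2" | "i = 2" "l = -2" | "i = 2" "l = 1" using iP lN by auto
      then show ?thesis
      proof cases
        case 1
        have "braid_eq (s @ [i]) (delta_pow k @ w0 @ [])"
          using hR[OF base'[unfolded 1] be_canc4(1)] 1 by simp
        then show ?thesis using w0N by (metis append_Nil2)
      next
        case 2
        have "braid_eq (s @ [i]) (delta_pow k @ w0 @ [1] @ [-1,-2,-1] @ [])"
          using hR[OF base'[unfolded 2] r21'] 2 by simp
        then have "braid_eq (s @ [i]) (delta_pow k @ (w0 @ [1]) @ [-1,-2,-1] @ [])" by simp
        from hD'[OF this] w0L have "braid_eq (s @ [i]) (delta_pow (k-1) @ map phi (w0 @ [1]))" by simp
        moreover have "set (map phi (w0 @ [1])) \<subseteq> PP" using pNP by simp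
        ultimately show ?thesis by blast
      next
        case 3
        have "braid_eq (s @ [i]) (delta_pow k @ w0 @ [])"
          using hR[OF base'[unfolded 3] be_canc4(4)] 3 by simp
        then show ?thesis using w0N by (metis append_Nil2)
      next
        case 4
        have "braid_eq (s @ [i]) (delta_pow k @ w0 @ [] @ [1,2,1] @ [-1])"
          using hR[OF base'[unfolded 4] r12'] 4 by simp
        then have "braid_eq (s @ [i]) (delta_pow k @ w0 @ [1,2,1] @ [-1])" by simp
        from hD[OF this w0L] have "braid_eq (s @ [i]) (delta_pow (k+1) @ map phi w0 @ [-1])" .
        moreover have "set (map phi w0 @ [-1]) \<subseteq> PP" using pNP by simp
        ultimately show ?thesis by blast
      qed
    qed
  qed
qed



lemma mmul_assoc: "mmul (mmul A B) C = mmul A (mmul B C)"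
  by (cases A rule: prod_cases4; cases B rule: prod_cases4; cases C rule: prod_cases4) (simp add: algebra_simps)

lemma mmul_mid[simp]: "mmul mid M = M" "mmul M mid = M"
  by (cases M rule: prod_cases4, simp add: mid_def)+

lemma mneg_mneg[simp]: "mneg (mneg M) = M"
  by (cases M rule: prod_cases4) simp

lemma mmul_mneg[simp]: "mmul (mneg M) N = mneg (mmul M N)" "mmul M (mneg N) = mneg (mmul M N)"
  by (cases M rule: prod_cases4; cases N rule: prod_cases4; simp)+

lemma mneg_inj[simp]: "mneg M = mneg N \<longleftrightarrow> M = N"
  by (metis mneg_mneg)

lemma pm_refl[simp]: "pm_eq M M" by (simp add: pm_eq_def)
lemma pm_sym: "pm_eq M N \<Longrightarrow> pm_eq N M" by (auto simp: pm_eq_def)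
lemma pm_trans: "pm_eq M N \<Longrightarrow> pm_eq N P \<Longrightarrow> pm_eq M P" by (auto simp: pm_eq_def)
lemma pm_neg[simp]: "pm_eq (mneg M) N = pm_eq M N" "pm_eq M (mneg N) = pm_eq M N"
  by (auto simp: pm_eq_def)
lemma pm_mulL: "pm_eq M N \<Longrightarrow> pm_eq (mmul P M) (mmul P N)" by (auto simp: pm_eq_def)
lemma pm_mulR: "pm_eq M N \<Longrightarrow> pm_eq (mmul M P) (mmul N P)" by (auto simp: pm_eq_def)
lemma pm_mul: "pm_eq M N \<Longrightarrow> pm_eq M' N' \<Longrightarrow> pm_eq (mmul M M') (mmul N N')"
  by (auto simp: pm_eq_def)

declare letter_mat.simps[simp del]
lemma letter_vals[simp]: "letter_mat 1 = (1, 0, -1, 1)" "letter_mat (-1) = (1, 0, 1, 1)"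
  "letter_mat 2 = (1, 1, 0, 1)" "letter_mat (-2) = (1, -1, 0, 1)"
  by (simp_all add: letter_mat.simps)

lemma foldr_img: "foldr (\<lambda>i M. mmul (letter_mat i) M) w N = mmul (braid_img w) N"
  by (induction w) (simp_all add: braid_img_def mmul_assoc)

lemma braid_img_Cons: "braid_img (i # w) = mmul (letter_mat i) (braid_img w)"
  by (simp add: braid_img_def)
lemma braid_img_Nil[simp]: "braid_img [] = mid"
  by (simp add: braid_img_def)
lemma braid_img_append: "braid_img (u @ v) = mmul (braid_img u) (braid_img v)"
proof -
  have "braid_img (u @ v) = foldr (\<lambda>i M. mmul (letter_mat i) M) u (braid_img v)" by (simp add: braid_img_def)
  then show ?thesis by (simp only: foldr_img)
qed

lemma basic_img: "braid_basic x y \<Longrightarrow> braid_img x = braid_img y"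
  by (induction rule: braid_basic.induct) (auto simp: braid_img_Cons mid_def)

lemma be_img: "braid_eq x y \<Longrightarrow> braid_img x = braid_img y"
  by (induction rule: braid_eq.induct) (simp_all add: braid_img_append basic_img)

definition esum :: "int list \<Rightarrow> int" where "esum w = sum_list (map sgn w)"

lemma esum_Nil[simp]: "esum [] = 0" by (simp add: esum_def)
lemma esum_Cons[simp]: "esum (i # w) = sgn i + esum w" by (simp add: esum_def)
lemma esum_append[simp]: "esum (u @ v) = esum u + esum v" by (simp add: esum_def)

lemma basic_esum: "braid_basic x y \<Longrightarrow> esum x = esum y"
  by (induction rule: braid_basic.induct) (auto simp: esum_def)

lemma be_esum: "braid_eq x y \<Longrightarrow> esum x = esum y"
  by (induction rule: braid_eq.induct) (simp_all add: basic_esum)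

lemma esum_rep: "esum (concat (replicate n x)) = int n * esum x"
  by (induction n) (simp_all add: algebra_simps)

lemma esum_dp: "esum (delta_pow k) = 3 * k"
  by (simp add: delta_pow_def esum_rep)

lemma img_rep: "braid_img (concat (replicate (Suc (Suc n)) x)) = mmul (mmul (braid_img x) (braid_img x)) (braid_img (concat (replicate n x)))"
  by (simp add: braid_img_append mmul_assoc)

lemma img_dp_nat: "pm_eq (braid_img (concat (replicate n x))) (if even n then mid else braid_img x)"
  if "mmul (braid_img x) (braid_img x) = mneg mid"
proof (induction n rule: nat_less_induct)
  case (1 n)
  show ?case
  proof (cases n)
    case 0 then show ?thesis by simp
  next
    case (Suc m)
    show ?thesis
    proof (cases m)
      case 0 then show ?thesis using Suc by simp
    next
      case (Suc m')
      have IH: "pm_eq (braid_img (concat (replicate m' x))) (if even m' then mid else braid_img x)"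
        using 1 Suc `n = Suc m` by simp
      have "braid_img (concat (replicate n x)) = mneg (braid_img (concat (replicate m' x)))"
        using img_rep[of m' x] `n = Suc m` Suc that by simp
      then show ?thesis using Suc `n = Suc m` IH by simp
    qed
  qed
qed

lemma img_D: "braid_img [1,2,1] = matA" "braid_img [-1,-2,-1] = mneg matA"
  by (simp_all add: braid_img_Cons matA_def mid_def)

lemma img_dp: "pm_eq (braid_img (delta_pow k)) (if even k then mid else matA)"
proof (cases "k \<ge> 0")
  case True
  have "mmul (braid_img [1,2,1]) (braid_img [1,2,1]) = mneg mid" by (simp add: img_D matA_def mid_def)
  from img_dp_nat[OF this, of "nat k", unfolded img_D] True show ?thesis by (simp add: delta_pow_def img_D even_nat_iff)
next
  case False
  have "mmul (braid_img [-1,-2,-1]) (braid_img [-1,-2,-1]) = mneg mid" by (simp add: img_D matA_def mid_def)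
  from img_dp_nat[OF this, of "nat (-k)", unfolded img_D] False show ?thesis
    by (auto simp add: delta_pow_def img_D even_nat_iff split: if_splits)
qed



definition Xm :: mat2 where "Xm = (1, 0, 1, 1)"
definition Ym :: mat2 where "Ym = (1, 1, 0, 1)"

fun wmat :: "bool list \<Rightarrow> mat2" where
  "wmat [] = mid"
| "wmat (b # ws) = mmul (if b then Ym else Xm) (wmat ws)"

definition esw :: "bool list \<Rightarrow> int" where
  "esw ws = sum_list (map (\<lambda>b. if b then 1 else -1) ws)"

lemma esw_simps[simp]: "esw [] = 0" "esw (b # ws) = (if b then 1 else -1) + esw ws"
  by (simp_all add: esw_def)

fun good :: "mat2 \<Rightarrow> bool" where
  "good (a, b, c, d) \<longleftrightarrow> a > 0 \<and> d > 0 \<and> b \<ge> 0 \<and> c \<ge> 0"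

lemma good_wmat: "good (wmat ws)"
proof (induction ws)
  case Nil then show ?case by (simp add: mid_def)
next
  case (Cons b ws)
  obtain a b' c d where e: "wmat ws = (a, b', c, d)" by (cases "wmat ws" rule: prod_cases4)
  with Cons show ?case by (auto simp: Xm_def Ym_def)
qed

lemma wmat_esw: "wmat ws1 = wmat ws2 \<Longrightarrow> esw ws1 = esw ws2"
proof (induction ws1 arbitrary: ws2)
  case Nil
  show ?case
  proof (cases ws2)
    case Nil then show ?thesis by simp
  next
    case (Cons b ws)
    obtain a b' c d where e: "wmat ws = (a, b', c, d)" by (cases "wmat ws" rule: prod_cases4)
    have "good (wmat ws)" by (rule good_wmat)
    with e Nil.prems Cons show ?thesis by (auto simp: Xm_def Ym_def mid_def split: if_splits)
  qed
next
  case (Cons x ws1)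
  show ?case
  proof (cases ws2)
    case Nil
    obtain a b' c d where e: "wmat ws1 = (a, b', c, d)" by (cases "wmat ws1" rule: prod_cases4)
    have "good (wmat ws1)" by (rule good_wmat)
    with e Cons.prems Nil show ?thesis by (auto simp: Xm_def Ym_def mid_def split: if_splits)
  next
    case (Cons y ws)
    obtain a b' c d where e: "wmat ws1 = (a, b', c, d)" by (cases "wmat ws1" rule: prod_cases4)
    obtain a2 b2 c2 d2 where e2: "wmat ws = (a2, b2, c2, d2)" by (cases "wmat ws" rule: prod_cases4)
    have g: "good (wmat ws1)" "good (wmat ws)" by (rule good_wmat)+
    have "x = y \<and> wmat ws1 = wmat ws"
      using Cons.prems Cons e e2 g by (auto simp: Xm_def Ym_def split: if_splits)
    then show ?thesis using Cons.IH Cons by simp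
  qed
qed

lemma Bpow_vals[simp]: "Bpow 0 = mid" "Bpow 1 = matB" "Bpow (-1) = matBinv"
  by (simp_all add: Bpow_def)

lemma form_unique:
  assumes "good (a, b, c, d)" "good (a', b', c', d')" "r1 \<in> {-1, 0, 1}" "r2 \<in> {-1, 0, 1}"
    "pm_eq (mmul (if p1 then matA else mid) (mmul (a, b, c, d) (Bpow r1)))
           (mmul (if p2 then matA else mid) (mmul (a', b', c', d') (Bpow r2)))"
  shows "r1 = r2 \<and> (a, b, c, d) = (a', b', c', d')"
  using assms by (auto simp: pm_eq_def matA_def mid_def matB_def matBinv_def split: if_splits)



lemma mid_set: "(\<forall>i. 0 < i \<and> i < length rs - 1 \<longrightarrow> rs ! i \<in> S) \<longleftrightarrow> set (butlast (tl rs)) \<subseteq> S"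
proof
  assume h: "\<forall>i. 0 < i \<and> i < length rs - 1 \<longrightarrow> rs ! i \<in> S"
  show "set (butlast (tl rs)) \<subseteq> S"
  proof
    fix x assume "x \<in> set (butlast (tl rs))"
    then obtain j where j: "j < length (butlast (tl rs))" "x = butlast (tl rs) ! j" by (auto simp: in_set_conv_nth)
    then have "x = rs ! (Suc j)" by (simp add: nth_butlast nth_tl)
    moreover have "0 < Suc j \<and> Suc j < length rs - 1" using j by simp
    ultimately show "x \<in> S" using h by blast
  qed
next
  assume h: "set (butlast (tl rs)) \<subseteq> S"
  show "\<forall>i. 0 < i \<and> i < length rs - 1 \<longrightarrow> rs ! i \<in> S"
  proof (intro allI impI)
    fix i assume i: "0 < i \<and> i < length rs - 1"
    then obtain j where ij: "i = Suc j" by (cases i) auto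
    have "j < length (butlast (tl rs))" using i ij by simp
    then have "butlast (tl rs) ! j \<in> S" using h nth_mem by blast
    moreover have "butlast (tl rs) ! j = rs ! i" using i ij \<open>j < _\<close> by (simp add: nth_butlast nth_tl)
    ultimately show "rs ! i \<in> S" by simp
  qed
qed

lemma valid_iff: "rad_valid rs \<longleftrightarrow> rs \<noteq> [] \<and> hd rs \<in> {-1, 0, 1} \<and> last rs \<in> {-1, 0, 1}
     \<and> set (butlast (tl rs)) \<subseteq> {-1, 1}"
  unfolding rad_valid_def mid_set[symmetric] by blast

lemma rad_word_Cons2: "rs \<noteq> [] \<Longrightarrow> rad_word (r # rs) = mmul (Bpow r) (mmul matA (rad_word rs))"
  by (cases rs) auto

lemma esw_pm1: "set xs \<subseteq> {-1, 1} \<Longrightarrow> esw (map (\<lambda>x. x = 1) xs) = sum_list xs"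
  by (induction xs) auto

lemma BA_vals: "mmul matB matA = Ym" "mmul matBinv matA = mneg Xm"
  "mmul matA matB = letter_mat 1" "mmul matA matBinv = mneg (letter_mat (-2))"
  "mmul matA matA = mneg mid"
  by (simp_all add: matA_def matB_def matBinv_def Xm_def Ym_def mid_def)

lemma L1: "rs \<noteq> [] \<Longrightarrow> set (butlast rs) \<subseteq> {-1, 1} \<Longrightarrow>
  pm_eq (rad_word rs) (mmul (wmat (map (\<lambda>x. x = 1) (butlast rs))) (Bpow (last rs)))"
proof (induction rs rule: rad_word.induct)
  case 1 then show ?case by simp
next
  case (2 r) then show ?case by simp
next
  case (3 r r' rs)
  then have r: "r \<in> {-1, 1}" and rest: "set (butlast (r' # rs)) \<subseteq> {-1, 1}" by auto
  have IH: "pm_eq (rad_word (r' # rs)) (mmul (wmat (map (\<lambda>x. x = 1) (butlast (r' # rs)))) (Bpow (last (r' # rs))))"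
    using 3(1) rest by simp
  have hr: "pm_eq (mmul (Bpow r) matA) (if r = 1 then Ym else Xm)"
    using r BA_vals by auto
  have "rad_word (r # r' # rs) = mmul (mmul (Bpow r) matA) (rad_word (r' # rs))"
    by (simp add: mmul_assoc)
  moreover have "pm_eq (mmul (mmul (Bpow r) matA) (rad_word (r' # rs)))
      (mmul (if r = 1 then Ym else Xm) (mmul (wmat (map (\<lambda>x. x = 1) (butlast (r' # rs)))) (Bpow (last (r' # rs)))))"
    by (rule pm_mul[OF hr IH])
  ultimately show ?case by (simp add: mmul_assoc)
qed

definition form :: "bool \<Rightarrow> bool list \<Rightarrow> int \<Rightarrow> mat2" where
  "form p ws r = mmul (if p then matA else mid) (mmul (wmat ws) (Bpow r))"

lemma sum_butlast: "rs \<noteq> [] \<Longrightarrow> sum_list rs = sum_list (butlast rs) + last rs"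
  by (cases rs rule: rev_cases) auto

lemma DL: assumes v: "rad_valid rs"
  shows "\<exists>p ws r. r \<in> {-1, 0, 1} \<and> pm_eq (rad_word rs) (form p ws r) \<and> sum_list rs = esw ws + r"
proof -
  from v have ne: "rs \<noteq> []" and hd: "hd rs \<in> {-1, 0, 1}" and la: "last rs \<in> {-1, 0, 1}"
    and mi: "set (butlast (tl rs)) \<subseteq> {-1, 1}" by (auto simp: valid_iff)
  obtain r t where rs: "rs = r # t" using ne by (cases rs) auto
  show ?thesis
  proof (cases "r = 0 \<and> t \<noteq> []")
    case True
    then have t: "t \<noteq> []" "set (butlast t) \<subseteq> {-1, 1}" using mi rs by auto
    have "rad_word rs = mmul matA (rad_word t)" using rs True by (simp add: rad_word_Cons2)
    moreover have "pm_eq (rad_word t) (mmul (wmat (map (\<lambda>x. x = 1) (butlast t))) (Bpow (last t)))"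
      using L1[OF t] .
    ultimately have "pm_eq (rad_word rs) (form True (map (\<lambda>x. x = 1) (butlast t)) (last t))"
      by (simp add: form_def pm_mulL)
    moreover have "sum_list rs = esw (map (\<lambda>x. x = 1) (butlast t)) + last t"
      using rs True esw_pm1[OF t(2)] sum_butlast[OF t(1)] by simp
    moreover have "last t \<in> {-1, 0, 1}" using la rs t by simp
    ultimately show ?thesis by blast
  next
    case False
    have bl: "set (butlast rs) \<subseteq> {-1, 1}"
    proof (cases "t = []")
      case True then show ?thesis using rs by simp
    next
      case f: False
      then have "r \<noteq> 0" using False by simp
      then have "r \<in> {-1, 1}" using hd rs by auto
      then show ?thesis using mi rs f by auto
    qed
    have "pm_eq (rad_word rs) (form False (map (\<lambda>x. x = 1) (butlast rs)) (last rs))"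
      using L1[OF ne bl] by (simp add: form_def)
    moreover have "sum_list rs = esw (map (\<lambda>x. x = 1) (butlast rs)) + last rs"
      using esw_pm1[OF bl] sum_butlast[OF ne] by simp
    ultimately show ?thesis using la by blast
  qed
qed

lemma UL: assumes "rad_valid rs1" "rad_valid rs2" "pm_eq (rad_word rs1) (rad_word rs2)"
  shows "sum_list rs1 = sum_list rs2"
proof -
  obtain p1 ws1 r1 where 1: "r1 \<in> {-1, 0, 1}" "pm_eq (rad_word rs1) (form p1 ws1 r1)" "sum_list rs1 = esw ws1 + r1"
    using DL[OF assms(1)] by blast
  obtain p2 ws2 r2 where 2: "r2 \<in> {-1, 0, 1}" "pm_eq (rad_word rs2) (form p2 ws2 r2)" "sum_list rs2 = esw ws2 + r2"
    using DL[OF assms(2)] by blast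
  have pe: "pm_eq (form p1 ws1 r1) (form p2 ws2 r2)"
    using pm_trans[OF pm_trans[OF pm_sym[OF 1(2)] assms(3)] 2(2)] .
  obtain a b c d where e1: "wmat ws1 = (a, b, c, d)" by (cases "wmat ws1" rule: prod_cases4)
  obtain a' b' c' d' where e2: "wmat ws2 = (a', b', c', d')" by (cases "wmat ws2" rule: prod_cases4)
  have "r1 = r2 \<and> (a, b, c, d) = (a', b', c', d')"
    apply (rule form_unique[of a b c d a' b' c' d' r1 r2 p1 p2])
    using good_wmat[of ws1] good_wmat[of ws2] e1 e2 1(1) 2(1) pe by (simp_all add: form_def)
  then have "r1 = r2" "wmat ws1 = wmat ws2" using e1 e2 by auto
  then show ?thesis using 1(3) 2(3) wmat_esw[OF \<open>wmat ws1 = wmat ws2\<close>] by simp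
qed

lemma Rad_eval: assumes "rad_valid rs" "pm_eq (rad_word rs) g"
  shows "Rademacher g = sum_list rs"
  unfolding Rademacher_def
proof (rule the_equality)
  show "\<exists>rsa. rad_valid rsa \<and> pm_eq (rad_word rsa) g \<and> sum_list rs = sum_list rsa"
    using assms by blast
next
  fix s assume "\<exists>rsa. rad_valid rsa \<and> pm_eq (rad_word rsa) g \<and> s = sum_list rsa"
  then obtain rs' where "rad_valid rs'" "pm_eq (rad_word rs') g" "s = sum_list rs'" by blast
  then have "pm_eq (rad_word rs) (rad_word rs')" using pm_trans[OF assms(2) pm_sym] by blast
  then show "s = sum_list rs" using UL[OF assms(1) \<open>rad_valid rs'\<close>] \<open>s = _\<close> by simp
qed



lemma qvals_neg: "qvals (-p) (-q) = qvals p q"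
  by (simp add: qvals_def)

lemma rot_case_neg: "rot_case n (mneg M) = rot_case n M"
  by (cases M rule: prod_cases4) (simp add: qvals_neg)

lemma RC1: fixes a b c d :: int
  assumes "a \<ge> 0" "b \<ge> 0" "c \<ge> 0" "d \<ge> 0" "a * d - b * c = 1"
  shows "rot_case 1 (a, b, c, d)"
proof -
  have bc: "b * c \<ge> 0" using assms by simp
  have "a \<noteq> 0"
  proof
    assume "a = 0" with assms(5) have "b * c = -1" by simp
    with bc show False by simp
  qed
  then have a: "a > 0" using assms by simp
  have av: "ereal (real_of_int c / real_of_int a) \<in> qvals c a" using a by (simp add: qvals_def)
  have a0: "0 \<le> real_of_int c / real_of_int a" using a assms by simp
  show ?thesis
  proof (cases "b = 0")
    case True
    then have bv: "\<infinity> \<in> qvals d b" by (simp add: qvals_def)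
    show ?thesis unfolding rot_case.simps
      apply (rule bexI[OF _ av])
      apply (rule bexI[OF _ bv])
      using a0 by simp
  next
    case False
    then have b: "b > 0" using assms by simp
    have "real_of_int a * real_of_int d - real_of_int b * real_of_int c = 1"
      using assms(5) by (metis of_int_1 of_int_diff of_int_mult)
    then have lt: "real_of_int c / real_of_int a < real_of_int d / real_of_int b"
      using a b by (simp add: field_simps)
    have bv: "ereal (real_of_int d / real_of_int b) \<in> qvals d b" using b by (simp add: qvals_def)
    show ?thesis unfolding rot_case.simps
      apply (rule bexI[OF _ av])
      apply (rule bexI[OF _ bv])
      using a0 lt by simp
  qed
qed

lemma RC2: fixes a b c d :: int
  assumes "a \<ge> 0" "b \<ge> 0" "c \<ge> 0" "d \<ge> 0" "a * d - b * c = 1"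
  shows "rot_case 2 (mmul matA (a, b, c, d))"
proof -
  have bc: "b * c \<ge> 0" using assms by simp
  have "d \<noteq> 0"
  proof
    assume "d = 0" with assms(5) have "b * c = -1" by simp
    with bc show False by simp
  qed
  then have d: "d > 0" using assms by simp
  have e: "mmul matA (a, b, c, d) = (c, d, -a, -b)" by (simp add: matA_def)
  have bv: "ereal (real_of_int (-b) / real_of_int d) \<in> qvals (-b) d" using d by (simp add: qvals_def)
  have b0: "real_of_int (-b) / real_of_int d \<le> 0" using d assms by (simp add: divide_nonpos_pos)
  show ?thesis
  proof (cases "c = 0")
    case True
    then have av: "-\<infinity> \<in> qvals (-a) c" by (simp add: qvals_def)
    show ?thesis unfolding e rot_case.simps
      apply (rule bexI[OF _ av])
      apply (rule bexI[OF _ bv])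
      using b0 by simp
  next
    case False
    then have c: "c > 0" using assms by simp
    have "real_of_int a * real_of_int d - real_of_int b * real_of_int c = 1"
      using assms(5) by (metis of_int_1 of_int_diff of_int_mult)
    then have lt: "real_of_int (-a) / real_of_int c < real_of_int (-b) / real_of_int d"
      using c d by (simp add: field_simps)
    have av: "ereal (real_of_int (-a) / real_of_int c) \<in> qvals (-a) c" using c by (simp add: qvals_def)
    show ?thesis unfolding e rot_case.simps
      apply (rule bexI[OF _ av])
      apply (rule bexI[OF _ bv])
      using b0 lt by simp
  qed
qed

lemma RC4: fixes p q r s :: int
  assumes "p \<ge> 0" "q \<le> 0" "r \<le> 0" "s \<ge> 0" "p * s - q * r = 1"
  shows "rot_case 4 (p, q, r, s)"
proof -
  have qr: "q * r \<ge> 0" using assms by (simp add: zero_le_mult_iff)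
  have "p \<noteq> 0"
  proof
    assume "p = 0" with assms(5) have "q * r = -1" by simp
    with qr show False by simp
  qed
  then have p: "p > 0" using assms by simp
  have av: "ereal (real_of_int r / real_of_int p) \<in> qvals r p" using p by (simp add: qvals_def)
  have a0: "real_of_int r / real_of_int p \<le> 0" using p assms by (simp add: divide_nonpos_pos)
  show ?thesis
  proof (cases "q = 0")
    case True
    then have bv: "-\<infinity> \<in> qvals s q" by (simp add: qvals_def)
    show ?thesis unfolding rot_case.simps
      apply (rule bexI[OF _ av])
      apply (rule bexI[OF _ bv])
      using a0 by simp
  next
    case False
    then have q: "q < 0" using assms by simp
    have "real_of_int p * real_of_int s - real_of_int q * real_of_int r = 1"
      using assms(5) by (metis of_int_1 of_int_diff of_int_mult)
    then have lt: "real_of_int s / real_of_int q < real_of_int r / real_of_int p"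
      using p q by (simp add: field_simps)
    have bv: "ereal (real_of_int s / real_of_int q) \<in> qvals s q" using q by (simp add: qvals_def)
    show ?thesis unfolding rot_case.simps
      apply (rule bexI[OF _ av])
      apply (rule bexI[OF _ bv])
      using a0 lt by simp
  qed
qed

lemma RC3: fixes p q r s :: int
  assumes "p \<ge> 0" "q \<le> 0" "r \<le> 0" "s \<ge> 0" "p * s - q * r = 1"
  shows "rot_case 3 (mmul matA (p, q, r, s))"
proof -
  have qr: "q * r \<ge> 0" using assms by (simp add: zero_le_mult_iff)
  have "s \<noteq> 0"
  proof
    assume "s = 0" with assms(5) have "q * r = -1" by simp
    with qr show False by simp
  qed
  then have s: "s > 0" using assms by simp
  have e: "mmul matA (p, q, r, s) = (r, s, -p, -q)" by (simp add: matA_def)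
  have bv: "ereal (real_of_int (-q) / real_of_int s) \<in> qvals (-q) s" using s by (simp add: qvals_def)
  have b0: "0 \<le> real_of_int (-q) / real_of_int s" using s assms by (simp add: divide_nonpos_pos)
  show ?thesis
  proof (cases "r = 0")
    case True
    then have av: "\<infinity> \<in> qvals (-p) r" by (simp add: qvals_def)
    show ?thesis unfolding e rot_case.simps
      apply (rule bexI[OF _ av])
      apply (rule bexI[OF _ bv])
      using b0 by simp
  next
    case False
    then have r: "r < 0" using assms by simp
    have "real_of_int p * real_of_int s - real_of_int q * real_of_int r = 1"
      using assms(5) by (metis of_int_1 of_int_diff of_int_mult)
    then have lt: "real_of_int (-q) / real_of_int s < real_of_int (-p) / real_of_int r"
      using r s by (simp add: field_simps)
    have av: "ereal (real_of_int (-p) / real_of_int r) \<in> qvals (-p) r" using r by (simp add: qvals_def)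
    show ?thesis unfolding e rot_case.simps
      apply (rule bexI[OF _ av])
      apply (rule bexI[OF _ bv])
      using b0 lt by simp
  qed
qed

lemma mdet_mmul: "mdet (mmul M N) = mdet M * mdet N"
  by (cases M rule: prod_cases4; cases N rule: prod_cases4) (simp add: algebra_simps)

lemma det_img: "set w \<subseteq> LL \<Longrightarrow> mdet (braid_img w) = 1"
  by (induction w) (auto simp: braid_img_Cons mdet_mmul mid_def)

fun posm :: "mat2 \<Rightarrow> bool" where
  "posm (a, b, c, d) \<longleftrightarrow> a \<ge> 0 \<and> b \<ge> 0 \<and> c \<ge> 0 \<and> d \<ge> 0"
fun negm :: "mat2 \<Rightarrow> bool" where
  "negm (a, b, c, d) \<longleftrightarrow> a \<ge> 0 \<and> b \<le> 0 \<and> c \<le> 0 \<and> d \<ge> 0"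

lemma posm_mul: "posm M \<Longrightarrow> posm N \<Longrightarrow> posm (mmul M N)"
  by (cases M rule: prod_cases4; cases N rule: prod_cases4) auto

lemma negm_mul4: fixes a b c d e f g h :: int
  assumes "a \<ge> 0" "b \<le> 0" "c \<le> 0" "d \<ge> 0" "e \<ge> 0" "f \<le> 0" "g \<le> 0" "h \<ge> 0"
  shows "negm (mmul (a, b, c, d) (e, f, g, h))"
proof -
  have "a * e \<ge> 0" "b * g \<ge> 0" "a * f \<le> 0" "b * h \<le> 0" "c * e \<le> 0" "d * g \<le> 0" "c * f \<ge> 0" "d * h \<ge> 0"
    using assms by (simp_all add: mult_nonneg_nonneg mult_nonpos_nonpos mult_nonneg_nonpos mult_nonpos_nonneg)
  then show ?thesis by simp
qed

lemma negm_mul: "negm M \<Longrightarrow> negm N \<Longrightarrow> negm (mmul M N)"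
  by (cases M rule: prod_cases4; cases N rule: prod_cases4) (simp only: negm_mul4 negm.simps)

lemma posm_img: "set w \<subseteq> PP \<Longrightarrow> posm (braid_img w)"
proof (induction w)
  case Nil then show ?case by (simp add: mid_def)
next
  case (Cons i w)
  then have "posm (letter_mat i)" by auto
  with Cons show ?case by (simp add: braid_img_Cons posm_mul)
qed

lemma negm_img: "set w \<subseteq> NN \<Longrightarrow> negm (braid_img w)"
proof (induction w)
  case Nil then show ?case by (simp add: mid_def)
next
  case (Cons i w)
  then have "negm (letter_mat i)" by auto
  with Cons show ?case by (simp add: braid_img_Cons negm_mul)
qed

lemma rc_pos: assumes "set w \<subseteq> PP"
  shows "rot_case 1 (braid_img w)" "rot_case 2 (mmul matA (braid_img w))"
proof -
  obtain a b c d where e: "braid_img w = (a, b, c, d)" by (cases "braid_img w" rule: prod_cases4)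
  have "set w \<subseteq> LL" using assms by auto
  from det_img[OF this] posm_img[OF assms] e have h: "a \<ge> 0" "b \<ge> 0" "c \<ge> 0" "d \<ge> 0" "a * d - b * c = 1" by auto
  show "rot_case 1 (braid_img w)" using RC1[OF h] e by simp
  show "rot_case 2 (mmul matA (braid_img w))" using RC2[OF h] e by simp
qed

lemma rc_neg: assumes "set w \<subseteq> NN"
  shows "rot_case 4 (braid_img w)" "rot_case 3 (mmul matA (braid_img w))"
proof -
  obtain a b c d where e: "braid_img w = (a, b, c, d)" by (cases "braid_img w" rule: prod_cases4)
  have "set w \<subseteq> LL" using assms by auto
  from det_img[OF this] negm_img[OF assms] e have h: "a \<ge> 0" "b \<le> 0" "c \<le> 0" "d \<ge> 0" "a * d - b * c = 1" by auto
  show "rot_case 4 (braid_img w)" using RC4[OF h] e by simp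
  show "rot_case 3 (mmul matA (braid_img w))" using RC3[OF h] e by simp
qed



lemma letter_pos: "i \<in> PP \<Longrightarrow> pm_eq (letter_mat i) (mmul (Bpow (sgn i)) matA)"
  by (auto simp: BA_vals Ym_def Xm_def pm_eq_def)

lemma letter_neg: "i \<in> NN \<Longrightarrow> pm_eq (letter_mat i) (mmul matA (Bpow (sgn i)))"
  by (auto simp: BA_vals pm_eq_def)

lemma exist_pos: "set w \<subseteq> PP \<Longrightarrow> pm_eq (braid_img w) (rad_word (map sgn w @ [0]))"
proof (induction w)
  case Nil then show ?case by simp
next
  case (Cons i w)
  then have i: "i \<in> PP" and IH: "pm_eq (braid_img w) (rad_word (map sgn w @ [0]))" by auto
  have "rad_word (map sgn (i # w) @ [0]) = mmul (mmul (Bpow (sgn i)) matA) (rad_word (map sgn w @ [0]))"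
    by (simp add: rad_word_Cons2 mmul_assoc)
  moreover have "pm_eq (braid_img (i # w)) (mmul (mmul (Bpow (sgn i)) matA) (rad_word (map sgn w @ [0])))"
    unfolding braid_img_Cons by (rule pm_mul[OF letter_pos[OF i] IH])
  ultimately show ?case by simp
qed

lemma exist_neg: "w \<noteq> [] \<Longrightarrow> set w \<subseteq> NN \<Longrightarrow> pm_eq (braid_img w) (mmul matA (rad_word (map sgn w)))"
proof (induction w)
  case Nil then show ?case by simp
next
  case (Cons i w)
  then have i: "i \<in> NN" by auto
  show ?case
  proof (cases "w = []")
    case True
    then show ?thesis using letter_neg[OF i] by (simp add: braid_img_Cons)
  next
    case False
    then have IH: "pm_eq (braid_img w) (mmul matA (rad_word (map sgn w)))" using Cons by auto
    have "mmul matA (rad_word (map sgn (i # w))) = mmul (mmul matA (Bpow (sgn i))) (mmul matA (rad_word (map sgn w)))"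
      using False by (simp add: rad_word_Cons2 mmul_assoc)
    moreover have "pm_eq (braid_img (i # w)) (mmul (mmul matA (Bpow (sgn i))) (mmul matA (rad_word (map sgn w))))"
      unfolding braid_img_Cons by (rule pm_mul[OF letter_neg[OF i] IH])
    ultimately show ?thesis by simp
  qed
qed

lemma butlast_tl_snoc: "butlast (tl (xs @ [x])) = tl xs"
  by (cases xs) auto

lemma sgn_PP: "set w \<subseteq> PP \<Longrightarrow> set (map sgn w) \<subseteq> {-1, 1}" by auto
lemma sgn_NN: "set w \<subseteq> NN \<Longrightarrow> set (map sgn w) \<subseteq> {-1, 1}" by auto

lemma set_tl_sub: "set (tl xs) \<subseteq> set xs" by (cases xs) auto
lemma set_butlast_sub: "set (butlast xs) \<subseteq> set xs" by (induction xs) auto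

lemma valid_pos: assumes "set w \<subseteq> PP" shows "rad_valid (map sgn w @ [0])"
proof -
  have s: "set (map sgn w) \<subseteq> {-1, 1}" using sgn_PP[OF assms] .
  have "hd (map sgn w @ [0]) \<in> {-1, 0, 1}" using s by (cases w) auto
  moreover have "set (tl (map sgn w)) \<subseteq> {-1, 1}" using s set_tl_sub[of "map sgn w"] by blast
  ultimately show ?thesis by (simp add: valid_iff butlast_tl_snoc)
qed

lemma valid_neg: assumes "w \<noteq> []" "set w \<subseteq> NN" shows "rad_valid (0 # map sgn w)"
proof -
  have s: "set (map sgn w) \<subseteq> {-1, 1}" using sgn_NN[OF assms(2)] .
  have "last (map sgn w) \<in> set (map sgn w)" using assms(1) by (intro last_in_set) simp
  then have "last (map sgn w) \<in> {-1, 1}" using s by blast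
  moreover have "set (butlast (map sgn w)) \<subseteq> {-1, 1}" using s set_butlast_sub[of "map sgn w"] by blast
  ultimately show ?thesis using assms(1) by (auto simp: valid_iff)
qed

lemma exist_w: assumes "set w \<subseteq> PP \<or> set w \<subseteq> NN"
  shows "\<exists>rs. rad_valid rs \<and> pm_eq (braid_img w) (rad_word rs) \<and> sum_list rs = esum w"
proof (cases "set w \<subseteq> PP")
  case True
  then show ?thesis using exist_pos[OF True] valid_pos[OF True] by (auto simp: esum_def)
next
  case False
  then have N: "set w \<subseteq> NN" and ne: "w \<noteq> []" using assms by auto
  have "rad_word (0 # map sgn w) = mmul matA (rad_word (map sgn w))" using ne by (simp add: rad_word_Cons2)
  then show ?thesis using exist_neg[OF ne N] valid_neg[OF ne N] by (auto simp: esum_def)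
qed

lemma AL: assumes v: "rad_valid rs"
  shows "\<exists>rs'. rad_valid rs' \<and> pm_eq (rad_word rs') (mmul matA (rad_word rs)) \<and> sum_list rs' = sum_list rs"
proof -
  from v have ne: "rs \<noteq> []" and hd: "hd rs \<in> {-1, 0, 1}" and la: "last rs \<in> {-1, 0, 1}"
    and mi: "set (butlast (tl rs)) \<subseteq> {-1, 1}" by (auto simp: valid_iff)
  obtain r t where rs: "rs = r # t" using ne by (cases rs) auto
  show ?thesis
  proof (cases "r = 0")
    case True
    show ?thesis
    proof (cases "t = []")
      case True
      have "rad_valid [0, 0]" by (simp add: valid_iff)
      moreover have "rad_word [0, 0] = mmul matA (rad_word rs)" using rs True \<open>r = 0\<close> by simp
      moreover have "sum_list [0, 0::int] = sum_list rs" using rs True \<open>r = 0\<close> by simp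
      ultimately show ?thesis by (intro exI[of _ "[0, 0]"]) simp
    next
      case False
      have e: "rad_word rs = mmul matA (rad_word t)" using rs False \<open>r = 0\<close> by (simp add: rad_word_Cons2)
      have bt: "set (butlast t) \<subseteq> {-1, 1}" using mi rs by simp
      have "hd t \<in> {-1, 0, 1}"
      proof (cases "tl t = []")
        case True
        then have "hd t = last t" using False by (cases t) auto
        then show ?thesis using la rs False by simp
      next
        case f2: False
        then have "hd t \<in> set (butlast t)" using False by (cases t) auto
        then show ?thesis using bt by auto
      qed
      moreover have "set (butlast (tl t)) \<subseteq> {-1, 1}" using bt set_tl_sub[of "butlast t"]
        by (simp add: butlast_tl)
      moreover have "last t \<in> {-1, 0, 1}" using la rs False by simp
      ultimately have "rad_valid t" using False by (simp add: valid_iff)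
      moreover have "pm_eq (rad_word t) (mmul matA (rad_word rs))"
        using e by (simp add: mmul_assoc[symmetric] BA_vals)
      moreover have "sum_list t = sum_list rs" using rs \<open>r = 0\<close> by simp
      ultimately show ?thesis by blast
    qed
  next
    case False
    have "rad_valid (0 # rs)"
    proof -
      have "r \<in> {-1, 1}" using hd rs False by auto
      then have "set (butlast rs) \<subseteq> {-1, 1}" using mi rs by (cases t) auto
      then show ?thesis using la ne by (simp add: valid_iff)
    qed
    moreover have "rad_word (0 # rs) = mmul matA (rad_word rs)" using ne by (simp add: rad_word_Cons2)
    moreover have "sum_list (0 # rs) = sum_list rs" by simp
    ultimately show ?thesis by (intro exI[of _ "0 # rs"]) simp
  qed
qed

lemma KL: assumes be: "braid_eq s (delta_pow k @ w)" and ty: "set w \<subseteq> PP \<or> set w \<subseteq> NN"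
  shows "Rademacher (braid_img s) = esum w" "esum s = 3 * k + esum w"
proof -
  show "esum s = 3 * k + esum w" using be_esum[OF be] by (simp add: esum_dp)
  obtain rs where rs: "rad_valid rs" "pm_eq (braid_img w) (rad_word rs)" "sum_list rs = esum w"
    using exist_w[OF ty] by blast
  have img: "braid_img s = mmul (braid_img (delta_pow k)) (braid_img w)"
    using be_img[OF be] by (simp add: braid_img_append)
  have p1: "pm_eq (braid_img s) (mmul (if even k then mid else matA) (rad_word rs))"
    unfolding img by (rule pm_mul[OF img_dp rs(2)])
  show "Rademacher (braid_img s) = esum w"
  proof (cases "even k")
    case True
    then have "pm_eq (braid_img s) (rad_word rs)" using p1 by simp
    then show ?thesis using Rad_eval[OF rs(1) pm_sym] rs(3) by simp
  next
    case False
    obtain rs' where rs': "rad_valid rs'" "pm_eq (rad_word rs') (mmul matA (rad_word rs))" "sum_list rs' = sum_list rs"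
      using AL[OF rs(1)] by blast
    have "pm_eq (braid_img s) (mmul matA (rad_word rs))" using p1 False by simp
    then have "pm_eq (rad_word rs') (braid_img s)" using pm_trans[OF rs'(2) pm_sym] by blast
    then show ?thesis using Rad_eval[OF rs'(1)] rs'(3) rs(3) by simp
  qed
qed

definition rotP :: "int list \<Rightarrow> int \<Rightarrow> bool" where
  "rotP \<sigma> k = (\<exists>w. braid_eq \<sigma> (delta_pow k @ w) \<and>
      ((rot_case 1 (braid_img \<sigma>) \<and> even k \<and> set w \<subseteq> {-1, 2}) \<or>
       (rot_case 2 (braid_img \<sigma>) \<and> odd k \<and> set w \<subseteq> {-1, 2}) \<or>
       (rot_case 3 (braid_img \<sigma>) \<and> odd k \<and> set w \<subseteq> {1, -2}) \<or>
       (rot_case 4 (braid_img \<sigma>) \<and> even k \<and> set w \<subseteq> {1, -2})))"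

lemma rot_eval: assumes "set s \<subseteq> LL"
  shows "12 * rot s = real_of_int (esum s - Rademacher (braid_img s))"
proof -
  obtain k0 w0 where kw: "braid_eq s (delta_pow k0 @ w0)" and ty: "set w0 \<subseteq> PP \<or> set w0 \<subseteq> NN"
    using decomp[OF assms] by blast
  have img: "braid_img s = mmul (braid_img (delta_pow k0)) (braid_img w0)"
    using be_img[OF kw] by (simp add: braid_img_append)
  have pe: "pm_eq (braid_img (delta_pow k0)) (if even k0 then mid else matA)" by (rule img_dp)
  have rcs: "rot_case n (braid_img s) = rot_case n (mmul (if even k0 then mid else matA) (braid_img w0))" for n
    using pe unfolding img pm_eq_def by (auto simp: rot_case_neg)
  have P0: "rotP s k0"
    unfolding rotP_def
  proof (intro exI conjI)
    show "braid_eq s (delta_pow k0 @ w0)" by (rule kw)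
    show "(rot_case 1 (braid_img s) \<and> even k0 \<and> set w0 \<subseteq> {-1, 2}) \<or>
       (rot_case 2 (braid_img s) \<and> odd k0 \<and> set w0 \<subseteq> {-1, 2}) \<or>
       (rot_case 3 (braid_img s) \<and> odd k0 \<and> set w0 \<subseteq> {1, -2}) \<or>
       (rot_case 4 (braid_img s) \<and> even k0 \<and> set w0 \<subseteq> {1, -2})"
      using ty rcs rc_pos[of w0] rc_neg[of w0] by (cases "even k0") auto
  qed
  have uniq: "3 * k = esum s - Rademacher (braid_img s)" if "rotP s k" for k
  proof -
    from that obtain w where "braid_eq s (delta_pow k @ w)" "set w \<subseteq> PP \<or> set w \<subseteq> NN"
      unfolding rotP_def by blast
    from KL[OF this] show ?thesis by simp
  qed
  have "(THE k. rotP s k) = k0"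
  proof (rule the_equality)
    show "rotP s k0" by (rule P0)
    fix k assume "rotP s k"
    from uniq[OF this] uniq[OF P0] show "k = k0" by simp
  qed
  then have "rot s = real_of_int k0 / 4" unfolding rot_def rotP_def[symmetric] by simp
  then show ?thesis using uniq[OF P0] by simp
qed

lemma Rad_pm: "pm_eq M N \<Longrightarrow> Rademacher M = Rademacher N"
proof -
  assume h: "pm_eq M N"
  have "pm_eq (rad_word rs) M \<longleftrightarrow> pm_eq (rad_word rs) N" for rs
    using pm_trans[OF _ h] pm_trans[OF _ pm_sym[OF h]] by blast
  then show ?thesis unfolding Rademacher_def by simp
qed

theorem corollary3p1:
  fixes g1 g2 :: mat2 and s1 s2 :: "int list"
  assumes "mdet g1 = 1" and "mdet g2 = 1"
    and "braid_word s1" and "braid_word s2"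
    and "pm_eq (braid_img s1) g1" and "pm_eq (braid_img s2) g2"
  shows "real_of_int (Rademacher g1 + Rademacher g2 - Rademacher (mmul g1 g2))
         = -12 * (rot s1 + rot s2 - rot (s1 @ s2))"
proof -
  have L1: "set s1 \<subseteq> LL" and L2: "set s2 \<subseteq> LL" using assms(3,4) by (auto simp: braid_word_def)
  then have L12: "set (s1 @ s2) \<subseteq> LL" by simp
  have R1: "Rademacher g1 = Rademacher (braid_img s1)" using Rad_pm[OF assms(5)] by simp
  have R2: "Rademacher g2 = Rademacher (braid_img s2)" using Rad_pm[OF assms(6)] by simp
  have "pm_eq (braid_img (s1 @ s2)) (mmul g1 g2)"
    unfolding braid_img_append by (rule pm_mul[OF assms(5,6)])
  then have R12: "Rademacher (mmul g1 g2) = Rademacher (braid_img (s1 @ s2))" using Rad_pm by simp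
  show ?thesis using rot_eval[OF L1] rot_eval[OF L2] rot_eval[OF L12] R1 R2 R12
    by (simp add: algebra_simps)
qed


end
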